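(* Let $\nu$ be a norm on $\mathcal{M}_{n\times 1}$ and let $\|\cdot\|_\nu$ be the induced operator norm on $\mathcal{M}_{n\times n}$, $\|A\|_\nu=\max\{\nu(Ax):\nu(x)\le 1\}$. Let $\mathscr{E}$ and $\mathscr{E}^D$ be the sets of extreme points of the unit balls of $\nu$ and of its dual norm $\nu^D$, respectively. For $A\in\mathcal{M}_{n\times n}$ let $$V(A)=\{xy^*: x\in\mathscr{E}^D,\ y\in\mathscr{E},\ \langle A,xy^*\rangle=\|A\|_\nu\}.$$ Let $A,B\in\mathcal{M}_{n\times n}$. Then $A\parallel B$ in $\|\cdot\|_\nu$ if and only if there exist $k$ elements $x_1y_1^*,\dots,x_ky_k^*\in V(A)$, with $k\le 3$ in the complex case and $k\le 2$ in the real case, and positive numbers $t_1,\dots,t_k$ with $t_1+\cdots+t_k=1$, such that $$\Big|\sum_{j=1}^k t_j\langle B,x_jy_j^*\rangle\Big|=\|B\|_\nu.$$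
   Context: $\mathcal{M}_{m\times n}$ denotes complex (or, in the real case, real) $m\times n$ matrices, with inner product $\langle A,B\rangle=\mathrm{tr}(AB^* )$ (for column vectors $\langle x,y\rangle = y^*x$). The dual norm is $\nu^D(x)=\max\{|\langle x,y\rangle|:\nu(y)\le 1\}$. $A\parallel B$ in a norm $\|\cdot\|$ means $\|A+\lambda B\|=\|A\|+\|B\|$ for some scalar $\lambda$ with $|\lambda|=1$. *)

theory Defs
  imports "HOL-Analysis.Analysis"
begin

text \<open>The conjugation map cj is a parameter:
  cj = cnj for complex scalars and cj = id for real scalars.
  Column vectors in M_{n x 1} are 'a^'n, matrices in M_{n x n} are 'a^'n^'n.\<close>

definition is_norm_on :: "('a::real_normed_field ^ 'n \<Rightarrow> real) \<Rightarrow> bool" where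
  "is_norm_on \<nu> \<longleftrightarrow>
     (\<forall>x. 0 \<le> \<nu> x) \<and> (\<forall>x. \<nu> x = 0 \<longleftrightarrow> x = 0) \<and>
     (\<forall>c x. \<nu> (c *s x) = norm c * \<nu> x) \<and>
     (\<forall>x y. \<nu> (x + y) \<le> \<nu> x + \<nu> y)"

definition vinner :: "('a \<Rightarrow> 'a) \<Rightarrow> 'a::real_normed_field ^ 'n \<Rightarrow> 'a ^ 'n \<Rightarrow> 'a" where
  "vinner cj x y = (\<Sum>i\<in>UNIV. x $ i * cj (y $ i))"

definition minner :: "('a \<Rightarrow> 'a) \<Rightarrow> 'a::real_normed_field ^ 'n ^ 'n \<Rightarrow> 'a ^ 'n ^ 'n \<Rightarrow> 'a" where
  "minner cj A B = (\<Sum>i\<in>UNIV. \<Sum>j\<in>UNIV. A $ i $ j * cj (B $ i $ j))"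

definition outer :: "('a \<Rightarrow> 'a) \<Rightarrow> 'a::real_normed_field ^ 'n \<Rightarrow> 'a ^ 'n \<Rightarrow> 'a ^ 'n ^ 'n" where
  "outer cj x y = (\<chi> i j. x $ i * cj (y $ j))"

definition dual_norm :: "('a \<Rightarrow> 'a) \<Rightarrow> ('a::real_normed_field ^ 'n \<Rightarrow> real) \<Rightarrow> 'a ^ 'n \<Rightarrow> real" where
  "dual_norm cj \<nu> x = Sup {norm (vinner cj x y) | y. \<nu> y \<le> 1}"

definition op_norm :: "('a::real_normed_field ^ 'n \<Rightarrow> real) \<Rightarrow> 'a ^ 'n ^ 'n \<Rightarrow> real" where
  "op_norm \<nu> A = Sup {\<nu> (A *v x) | x. \<nu> x \<le> 1}"

definition ext_ball :: "('a::real_normed_field ^ 'n \<Rightarrow> real) \<Rightarrow> ('a ^ 'n) set" where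
  "ext_ball \<nu> = {x. x extreme_point_of {y. \<nu> y \<le> 1}}"

definition V_set :: "('a \<Rightarrow> 'a) \<Rightarrow> ('a::real_normed_field ^ 'n \<Rightarrow> real) \<Rightarrow> 'a ^ 'n ^ 'n \<Rightarrow> ('a ^ 'n ^ 'n) set" where
  "V_set cj \<nu> A = {outer cj x y | x y. x \<in> ext_ball (dual_norm cj \<nu>) \<and> y \<in> ext_ball \<nu> \<and>
                      minner cj A (outer cj x y) = of_real (op_norm \<nu> A)}"

definition norm_parallel :: "('a::real_normed_field ^ 'n \<Rightarrow> real) \<Rightarrow> 'a ^ 'n ^ 'n \<Rightarrow> 'a ^ 'n ^ 'n \<Rightarrow> bool" where
  "norm_parallel \<nu> A B \<longleftrightarrow>
     (\<exists>c::'a. norm c = 1 \<and> op_norm \<nu> (A + (\<chi> i j. c * B $ i $ j)) = op_norm \<nu> A + op_norm \<nu> B)"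

end

theory Submission
  imports Defs
begin


context
  fixes \<nu> :: "'a::{real_normed_field,euclidean_space} ^ 'n \<Rightarrow> real"
  assumes N: "is_norm_on \<nu>"
begin

lemma nu_nonneg: "0 \<le> \<nu> x" using N by (simp add: is_norm_on_def)
lemma nu_zero_iff: "\<nu> x = 0 \<longleftrightarrow> x = 0" using N by (simp add: is_norm_on_def)
lemma nu_smult: "\<nu> (c *s x) = norm c * \<nu> x" using N by (simp add: is_norm_on_def)
lemma nu_tri: "\<nu> (x + y) \<le> \<nu> x + \<nu> y" using N by (simp add: is_norm_on_def)
lemma nu_0[simp]: "\<nu> 0 = 0" using nu_zero_iff by simp

lemma nu_scaleR: "\<nu> (r *\<^sub>R x) = \<bar>r\<bar> * \<nu> x"
proof -
  have "r *\<^sub>R x = (of_real r :: 'a) *s x"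
    by (simp add: vec_eq_iff scaleR_conv_of_real[where 'a='a])
  then show ?thesis by (simp add: nu_smult)
qed

lemma nu_minus: "\<nu> (- x) = \<nu> x"
proof -
  show ?thesis using nu_smult[of "-1::'a" x] by simp
qed

lemma nu_diff_abs: "\<bar>\<nu> a - \<nu> b\<bar> \<le> \<nu> (a - b)"
proof -
  have "\<nu> a \<le> \<nu> (a - b) + \<nu> b" using nu_tri[of "a-b" b] by simp
  moreover have "\<nu> b \<le> \<nu> (b - a) + \<nu> a" using nu_tri[of "b-a" a] by simp
  moreover have "\<nu> (b - a) = \<nu> (a - b)" using nu_minus[of "a - b"] by simp
  ultimately show ?thesis by linarith
qed

lemma nu_sum: "finite I \<Longrightarrow> \<nu> (sum f I) \<le> (\<Sum>i\<in>I. \<nu> (f i))"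
  by (induction I rule: finite_induct) (auto intro: order_trans[OF nu_tri])

lemma vec_decomp: "(x::'a ^ 'n) = (\<Sum>i\<in>UNIV. (x $ i) *s axis i 1)"
  by (simp add: vec_eq_iff axis_def if_distrib[of "(*) _"] cong: if_cong)

lemma matvec_decomp: "(C::'a ^ 'n ^ 'n) *v y = (\<Sum>j\<in>UNIV. (y $ j) *s (\<chi> i. C $ i $ j))"
  by (simp add: vec_eq_iff matrix_vector_mult_def mult.commute)

lemma sum_decomp_bound:
  "\<nu> (\<Sum>j\<in>UNIV. (y $ j) *s v j) \<le> (\<Sum>j\<in>UNIV. \<nu> (v j)) * norm y"
proof -
  have "\<nu> (\<Sum>j\<in>UNIV. (y $ j) *s v j) \<le> (\<Sum>j\<in>UNIV. \<nu> ((y $ j) *s v j))"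
    by (rule nu_sum) simp
  also have "\<dots> = (\<Sum>j\<in>UNIV. norm (y $ j) * \<nu> (v j))" by (simp add: nu_smult)
  also have "\<dots> \<le> (\<Sum>j\<in>UNIV. norm y * \<nu> (v j))"
    by (rule sum_mono) (simp add: mult_right_mono Finite_Cartesian_Product.norm_nth_le nu_nonneg)
  finally show ?thesis by (simp add: sum_distrib_left mult.commute)
qed

lemma nu_upper: "\<exists>K\<ge>0. \<forall>x. \<nu> x \<le> K * norm x"
proof (intro exI[of _ "\<Sum>j\<in>UNIV. \<nu> (axis j 1)"] conjI allI)
  show "0 \<le> (\<Sum>j\<in>UNIV. \<nu> (axis j 1))" by (simp add: sum_nonneg nu_nonneg)
  fix x :: "'a^'n"
  have "\<nu> x = \<nu> (\<Sum>i\<in>UNIV. (x $ i) *s axis i 1)" using vec_decomp[of x] by simp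
  also have "\<dots> \<le> (\<Sum>j\<in>UNIV. \<nu> (axis j 1)) * norm x" by (rule sum_decomp_bound)
  finally show "\<nu> x \<le> (\<Sum>j\<in>UNIV. \<nu> (axis j 1)) * norm x" .
qed

lemma mat_upper: fixes C :: "'a^'n^'n" shows "\<exists>L\<ge>0. \<forall>y. \<nu> (C *v y) \<le> L * norm y"
proof (intro exI[of _ "\<Sum>j\<in>UNIV. \<nu> (\<chi> i. C $ i $ j)"] conjI allI)
  show "0 \<le> (\<Sum>j\<in>UNIV. \<nu> (\<chi> i. C $ i $ j))" by (simp add: sum_nonneg nu_nonneg)
  fix y :: "'a^'n"
  show "\<nu> (C *v y) \<le> (\<Sum>j\<in>UNIV. \<nu> (\<chi> i. C $ i $ j)) * norm y"
    unfolding matvec_decomp by (rule sum_decomp_bound)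
qed

lemma lip_cont:
  fixes f :: "'b::metric_space \<Rightarrow> real"
  assumes "\<And>a b. \<bar>f a - f b\<bar> \<le> L * dist a b"
  shows "continuous_on S f"
proof -
  have "(max L 0)-lipschitz_on S f"
  proof (rule lipschitz_onI)
    fix x y assume "x \<in> S" "y \<in> S"
    have "dist (f x) (f y) \<le> L * dist x y" using assms by (simp add: dist_real_def)
    also have "\<dots> \<le> max L 0 * dist x y" by (simp add: mult_right_mono)
    finally show "dist (f x) (f y) \<le> max L 0 * dist x y" .
  qed simp
  then show ?thesis by (rule lipschitz_on_continuous_on)
qed

lemma matnu_cont: fixes C :: "'a^'n^'n" shows "continuous_on S (\<lambda>y. \<nu> (C *v y))"
proof -
  obtain L where L: "\<forall>y. \<nu> (C *v y) \<le> L * norm y" using mat_upper by blast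
  show ?thesis
  proof (rule lip_cont[of _ L])
    fix a b :: "'a^'n"
    have "\<bar>\<nu> (C *v a) - \<nu> (C *v b)\<bar> \<le> \<nu> (C *v a - C *v b)" by (rule nu_diff_abs)
    also have "C *v a - C *v b = C *v (a - b)" by (simp add: matrix_vector_mult_diff_distrib)
    also have "\<nu> \<dots> \<le> L * dist a b" using L by (simp add: dist_norm)
    finally show "\<bar>\<nu> (C *v a) - \<nu> (C *v b)\<bar> \<le> L * dist a b" .
  qed
qed

lemma nu_cont: "continuous_on S \<nu>"
  using matnu_cont[of S "mat 1"] by simp

lemma nu_lower: "\<exists>c>0. \<forall>x. c * norm x \<le> \<nu> x"
proof -
  have "sphere (0::'a^'n) 1 \<noteq> {}" by simp
  then obtain m where m: "m \<in> sphere (0::'a^'n) 1" "\<forall>y\<in>sphere 0 1. \<nu> m \<le> \<nu> y"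
    using continuous_attains_inf[OF compact_sphere _ nu_cont] by blast
  have "m \<noteq> 0" using m by auto
  then have pos: "\<nu> m > 0" using nu_zero_iff nu_nonneg by (metis less_eq_real_def)
  show ?thesis
  proof (intro exI[of _ "\<nu> m"] conjI allI pos)
    fix x :: "'a^'n"
    show "\<nu> m * norm x \<le> \<nu> x"
    proof (cases "x = 0")
      case False
      let ?u = "(1 / norm x) *\<^sub>R x"
      have "?u \<in> sphere 0 1" using False by simp
      then have "\<nu> m \<le> \<nu> ?u" using m by blast
      also have "\<nu> ?u = \<nu> x / norm x" by (simp add: nu_scaleR)
      finally show ?thesis using False by (simp add: field_simps)
    qed simp
  qed
qed

lemma ball_closed: "closed {y. \<nu> y \<le> 1}"
  by (intro closed_Collect_le nu_cont continuous_on_const)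

lemma ball_bounded: "bounded {y. \<nu> y \<le> 1}"
proof -
  obtain c where c: "c > 0" "\<forall>x. c * norm x \<le> \<nu> x" using nu_lower by blast
  show ?thesis unfolding bounded_iff
  proof (intro exI[of _ "1/c"] ballI)
    fix x assume "x \<in> {y. \<nu> y \<le> 1}"
    then have "c * norm x \<le> 1" using c by (smt (verit) mem_Collect_eq)
    then show "norm x \<le> 1/c" using c by (simp add: field_simps)
  qed
qed

lemma ball_compact: "compact {y. \<nu> y \<le> 1}"
  using ball_closed ball_bounded by (simp add: compact_eq_bounded_closed)

lemma ball_convex: "convex {y. \<nu> y \<le> 1}"
proof (rule convexI)
  fix x y :: "'a^'n" and u v :: real
  assume "x \<in> {y. \<nu> y \<le> 1}" "y \<in> {y. \<nu> y \<le> 1}" "0 \<le> u" "0 \<le> v" "u + v = 1"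
  then have "\<nu> (u *\<^sub>R x + v *\<^sub>R y) \<le> u * \<nu> x + v * \<nu> y"
    using nu_tri[of "u *\<^sub>R x" "v *\<^sub>R y"] by (simp add: nu_scaleR)
  also have "\<dots> \<le> u * 1 + v * 1"
    using \<open>x \<in> _\<close> \<open>y \<in> _\<close> \<open>0 \<le> u\<close> \<open>0 \<le> v\<close> by (intro add_mono mult_left_mono) auto
  finally show "u *\<^sub>R x + v *\<^sub>R y \<in> {y. \<nu> y \<le> 1}" using \<open>u+v=1\<close> by simp
qed

lemma op_norm_max: fixes C :: "'a^'n^'n" shows "\<exists>y0. \<nu> y0 \<le> 1 \<and> op_norm \<nu> C = \<nu> (C *v y0) \<and> (\<forall>y. \<nu> y \<le> 1 \<longrightarrow> \<nu> (C *v y) \<le> op_norm \<nu> C)"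
proof -
  have "0 \<in> {y. \<nu> y \<le> 1}" by simp
  then have ne: "{y. \<nu> y \<le> 1} \<noteq> {}" by blast
  obtain y0 where y0: "y0 \<in> {y. \<nu> y \<le> 1}" "\<forall>y\<in>{y. \<nu> y \<le> 1}. \<nu> (C *v y) \<le> \<nu> (C *v y0)"
    using continuous_attains_sup[OF ball_compact ne matnu_cont] by blast
  have "op_norm \<nu> C = \<nu> (C *v y0)"
    unfolding op_norm_def by (rule cSup_eq_maximum) (use y0 in auto)
  then show ?thesis using y0 by auto
qed

lemma op_norm_nonneg: fixes C :: "'a^'n^'n" shows "0 \<le> op_norm \<nu> C"
  using op_norm_max[of C] nu_nonneg by metis

end


lemma ext_max:
  fixes S :: "'b::euclidean_space set" and f :: "'b \<Rightarrow> real"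
  assumes S: "compact S" "convex S" and f: "linear f" and x0: "x0 \<in> S" "f x0 = m"
    and le: "\<forall>y\<in>S. f y \<le> m"
  shows "\<exists>e. e extreme_point_of S \<and> f e = m"
proof -
  define T where "T = S \<inter> f -` {m}"
  have cf: "continuous_on UNIV f"
    using f linear_conv_bounded_linear linear_continuous_on by blast
  have "closed (f -` {m})"
    using continuous_closed_vimage[of "{m}" f] cf closed_singleton
    by (metis closed_vimage continuous_on_eq_continuous_within cf)
  then have cT: "compact T" unfolding T_def using S by blast
  have vT: "convex T" unfolding T_def
    by (intro convex_Int S convex_linear_vimage f convex_singleton)
  have neT: "T \<noteq> {}" using x0 unfolding T_def by auto
  have face: "T face_of S"
    unfolding face_of_def
  proof (intro conjI ballI impI)
    show "T \<subseteq> S" unfolding T_def by auto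
    show "convex T" by (rule vT)
    fix a b x assume ab: "a \<in> S" "b \<in> S" and xT: "x \<in> T" and xs: "x \<in> open_segment a b"
    then obtain u where u: "0 < u" "u < 1" "x = (1 - u) *\<^sub>R a + u *\<^sub>R b"
      by (auto simp: in_segment)
    have "f x = (1 - u) * f a + u * f b"
      using u f by (simp add: linear_add linear_scale)
    moreover have "f x = m" using xT unfolding T_def by auto
    moreover have "f a \<le> m" "f b \<le> m" using le ab by auto
    ultimately have eq: "(1 - u) * (m - f a) + u * (m - f b) = 0" "f a \<le> m" "f b \<le> m"
      by (auto simp: algebra_simps)
    have p1: "(1 - u) * (m - f a) \<ge> 0" using eq u by simp
    have p2: "u * (m - f b) \<ge> 0" using eq u by simp
    have "(1 - u) * (m - f a) = 0" "u * (m - f b) = 0" using p1 p2 eq(1) by linarith+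
    then have "f a = m \<and> f b = m" using u by auto
    then show "a \<in> T" "b \<in> T" using ab unfolding T_def by auto
  qed
  obtain e where e: "e extreme_point_of T"
    using extreme_point_exists_convex[OF cT vT neT] by blast
  then have "e extreme_point_of S" "e \<in> T" using extreme_point_of_face[OF face] by auto
  then show ?thesis unfolding T_def by auto
qed



locale scal =
  fixes cj :: "'a::{real_normed_field,euclidean_space} \<Rightarrow> 'a" and re :: "'a \<Rightarrow> real"
  assumes cj_add: "cj (a + b) = cj a + cj b"
  and cj_mult: "cj (a * b) = cj a * cj b"
  and cj_cj: "cj (cj a) = a"
  and norm_cj: "norm (cj a) = norm a"
  and cj_of_real: "cj (of_real r) = of_real r"
  and re_inner: "a \<bullet> b = re (a * cj b)"
  and re_le: "re a \<le> norm a"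
  and re_eq: "norm a \<le> re a \<Longrightarrow> a = of_real (norm a)"
  and mult_cj: "a * cj a = of_real (norm a ^ 2)"
begin

lemma cj_1[simp]: "cj 1 = 1" using cj_of_real[of 1] by simp
lemma cj_0[simp]: "cj 0 = 0" using cj_of_real[of 0] by simp

lemma cj_sum: "cj (sum f I) = (\<Sum>i\<in>I. cj (f i))"
  by (induction I rule: infinite_finite_induct) (simp_all add: cj_add)

lemma re_is_inner: "re a = a \<bullet> 1" using re_inner[of a 1] by simp

lemma re_add: "re (a + b) = re a + re b" by (simp add: re_is_inner inner_add_left)
lemma re_sum: "re (sum f I) = (\<Sum>i\<in>I. re (f i))" by (simp add: re_is_inner inner_sum_left)
lemma re_of_real_mult: "re (of_real r * a) = r * re a"
  by (simp add: re_is_inner scaleR_conv_of_real[symmetric])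
lemma re_of_real: "re (of_real r) = r"
proof -
  have "re 1 = 1" by (simp add: re_is_inner dot_square_norm)
  then show ?thesis using re_of_real_mult[of r 1] by simp
qed

lemma vinner_cj: "vinner cj x y = cj (vinner cj y x)"
  by (simp add: vinner_def cj_sum cj_mult cj_cj mult.commute)

lemma norm_vinner_sym: "norm (vinner cj x y) = norm (vinner cj y x)"
  by (subst vinner_cj) (simp add: norm_cj)

lemma minner_outer: "minner cj C (outer cj x y) = vinner cj (C *v y) x"
  by (simp add: minner_def outer_def vinner_def matrix_vector_mult_def cj_mult cj_cj
      sum_distrib_right sum_distrib_left mult_ac)

lemma re_vinner: "re (vinner cj z x) = z \<bullet> x"
  by (simp add: vinner_def inner_vec_def re_sum re_inner)

lemma vinner_bound: "norm (vinner cj x y) \<le> (\<Sum>i\<in>UNIV. norm (x$i)) * norm y"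
proof -
  have "norm (vinner cj x y) \<le> (\<Sum>i\<in>UNIV. norm (x$i * cj (y$i)))"
    unfolding vinner_def by (rule norm_sum)
  also have "\<dots> \<le> (\<Sum>i\<in>UNIV. norm (x$i) * norm y)"
    by (rule sum_mono) (simp add: norm_mult norm_cj mult_left_mono Finite_Cartesian_Product.norm_nth_le)
  finally show ?thesis by (simp add: sum_distrib_right)
qed

lemma vinner_smult_right: "vinner cj x (c *s y) = cj c * vinner cj x y"
  by (simp add: vinner_def cj_mult sum_distrib_left mult_ac)

lemma vinner_smult_left: "vinner cj (c *s x) y = c * vinner cj x y"
  by (simp add: vinner_def sum_distrib_left mult_ac)

lemma vinner_0_left[simp]: "vinner cj 0 y = 0" by (simp add: vinner_def)
lemma vinner_0_right[simp]: "vinner cj x 0 = 0" by (simp add: vinner_def)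

lemma vinner_diff_left: "vinner cj (a - b) k = vinner cj a k - vinner cj b k"
  by (simp add: vinner_def sum_subtractf algebra_simps)

lemma vinner_comb_left:
  "vinner cj (u *\<^sub>R a + v *\<^sub>R b) k = of_real u * vinner cj a k + of_real v * vinner cj b k"
  by (simp add: vinner_def sum.distrib sum_distrib_left scaleR_conv_of_real[where 'a='a] algebra_simps)

lemma vinner_self: "norm x ^ 2 \<le> norm (vinner cj x x)"
proof -
  have "norm x ^ 2 = x \<bullet> x" by (simp add: dot_square_norm)
  also have "\<dots> = re (vinner cj x x)" by (simp add: re_vinner)
  also have "\<dots> \<le> norm (vinner cj x x)" by (rule re_le)
  finally show ?thesis .
qed

context
  fixes \<nu> :: "'a ^ 'n \<Rightarrow> real"
  assumes N: "is_norm_on \<nu>"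
begin

lemma dual_bdd: "bdd_above {norm (vinner cj x y) | y. \<nu> y \<le> 1}"
proof -
  obtain c where c: "c > 0" "\<forall>x. c * norm x \<le> \<nu> x" using nu_lower[OF N] by blast
  show ?thesis unfolding bdd_above_def
  proof (intro exI[of _ "(\<Sum>i\<in>UNIV. norm (x$i)) * (1/c)"] ballI)
    fix r assume "r \<in> {norm (vinner cj x y) | y. \<nu> y \<le> 1}"
    then obtain y where y: "r = norm (vinner cj x y)" "\<nu> y \<le> 1" by auto
    have "norm y \<le> 1/c" using c y(2) by (smt (verit) le_divide_eq_1_pos mult.commute divide_inverse mult.left_neutral pos_le_divide_eq)
    then have "(\<Sum>i\<in>UNIV. norm (x$i)) * norm y \<le> (\<Sum>i\<in>UNIV. norm (x$i)) * (1/c)"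
      by (intro mult_left_mono) (auto intro: sum_nonneg)
    then show "r \<le> (\<Sum>i\<in>UNIV. norm (x$i)) * (1/c)" using y vinner_bound[of x y] by simp
  qed
qed

lemma dual_le1: "dual_norm cj \<nu> x \<le> 1 \<longleftrightarrow> (\<forall>k. \<nu> k \<le> 1 \<longrightarrow> norm (vinner cj x k) \<le> 1)"
proof
  assume a: "dual_norm cj \<nu> x \<le> 1"
  show "\<forall>k. \<nu> k \<le> 1 \<longrightarrow> norm (vinner cj x k) \<le> 1"
  proof (intro allI impI)
    fix k assume "\<nu> k \<le> 1"
    then have "norm (vinner cj x k) \<le> dual_norm cj \<nu> x"
      unfolding dual_norm_def by (intro cSup_upper dual_bdd) auto
    then show "norm (vinner cj x k) \<le> 1" using a by simp
  qed
next
  assume a: "\<forall>k. \<nu> k \<le> 1 \<longrightarrow> norm (vinner cj x k) \<le> 1"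
  have ne: "{norm (vinner cj x y) | y. \<nu> y \<le> 1} \<noteq> {}"
    using nu_0[OF N] by (metis (mono_tags, lifting) empty_iff mem_Collect_eq zero_less_one_class.zero_le_one)
  show "dual_norm cj \<nu> x \<le> 1"
    unfolding dual_norm_def by (rule cSup_least[OF ne]) (use a in auto)
qed

lemma dual_apply:
  assumes "dual_norm cj \<nu> x \<le> 1"
  shows "norm (vinner cj x z) \<le> \<nu> z"
proof (cases "z = 0")
  case False
  then have pos: "\<nu> z > 0" using nu_zero_iff[OF N] nu_nonneg[OF N] by (metis less_eq_real_def)
  define z' where "z' = (of_real (1 / \<nu> z) :: 'a) *s z"
  have "\<nu> z' = 1" unfolding z'_def using pos by (simp add: nu_smult[OF N] norm_divide)
  then have "norm (vinner cj x z') \<le> 1" using assms dual_le1 by auto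
  moreover have "vinner cj x z' = of_real (1 / \<nu> z) * vinner cj x z"
    unfolding z'_def by (simp only: vinner_smult_right cj_of_real)
  ultimately have "norm (vinner cj x z) / \<nu> z \<le> 1" using pos by (simp add: norm_mult norm_divide)
  then show ?thesis using pos by (simp add: field_simps)
qed (simp add: nu_nonneg[OF N])

lemma mbound:
  assumes "dual_norm cj \<nu> x \<le> 1" "\<nu> y \<le> 1"
  shows "norm (minner cj C (outer cj x y)) \<le> op_norm \<nu> C"
proof -
  have "norm (minner cj C (outer cj x y)) = norm (vinner cj x (C *v y))"
    by (simp add: minner_outer norm_vinner_sym)
  also have "\<dots> \<le> \<nu> (C *v y)" by (rule dual_apply[OF assms(1)])
  also have "\<dots> \<le> op_norm \<nu> C" using op_norm_max[OF N, of C] assms(2) by blast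
  finally show ?thesis .
qed

end
end


context scal begin
context
  fixes \<nu> :: "'a ^ 'n \<Rightarrow> real"
  assumes N: "is_norm_on \<nu>"
begin

lemma dual_set_eq: "{x. dual_norm cj \<nu> x \<le> 1} = (\<Inter>k\<in>{k. \<nu> k \<le> 1}. {x. norm (vinner cj x k) \<le> 1})"
  using dual_le1[OF N] by auto

lemma dual_closed: "closed {x. dual_norm cj \<nu> x \<le> 1}"
  unfolding dual_set_eq
  by (intro closed_INT ballI closed_Collect_le continuous_on_const)
     (simp add: vinner_def, intro continuous_intros)

lemma nu_upper_pos: "\<exists>K>0. \<forall>x. \<nu> x \<le> K * norm x"
proof -
  obtain K where K: "K \<ge> 0" "\<forall>x. \<nu> x \<le> K * norm x" using nu_upper[OF N] by blast
  show ?thesis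
  proof (intro exI[of _ "K + 1"] conjI allI)
    fix x
    have a: "\<nu> x \<le> K * norm x" "0 \<le> norm x" using K(2) by auto
    have "(K + 1) * norm x = K * norm x + norm x" by (simp add: distrib_right)
    then show "\<nu> x \<le> (K + 1) * norm x" using a by linarith
  qed (use K in simp)
qed

lemma dual_bounded: "bounded {x. dual_norm cj \<nu> x \<le> 1}"
proof -
  obtain K where K: "K > 0" "\<forall>x. \<nu> x \<le> K * norm x" using nu_upper_pos by blast
  show ?thesis unfolding bounded_iff
  proof (intro exI[of _ K] ballI)
    fix x assume x: "x \<in> {x. dual_norm cj \<nu> x \<le> 1}"
    show "norm x \<le> K"
    proof (cases "x = 0")
      case False
      then have nx: "norm x > 0" by simp
      define k where "k = (of_real (1 / (K * norm x)) :: 'a) *s x"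
      have "\<nu> k = \<nu> x / (K * norm x)" unfolding k_def using nx K
        by (simp add: nu_smult[OF N] norm_divide norm_mult del: of_real_mult of_real_divide)
      also have "\<dots> \<le> 1" using K nx by (simp add: field_simps)
      finally have "norm (vinner cj x k) \<le> 1" using x dual_le1[OF N] by auto
      moreover have "vinner cj x k = of_real (1 / (K * norm x)) * vinner cj x x"
        unfolding k_def by (simp only: vinner_smult_right cj_of_real)
      ultimately have "norm (vinner cj x x) / (K * norm x) \<le> 1"
        using K by (simp add: norm_mult norm_divide)
      then have "norm (vinner cj x x) \<le> K * norm x" using K nx by (simp add: field_simps)
      then have "norm x * norm x \<le> K * norm x" using vinner_self[of x] by (simp add: power2_eq_square)
      then show ?thesis using nx by simp
    qed (use K in simp)
  qed
qed

lemma dual_compact: "compact {x. dual_norm cj \<nu> x \<le> 1}"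
  using dual_closed dual_bounded by (simp add: compact_eq_bounded_closed)

lemma dual_convex: "convex {x. dual_norm cj \<nu> x \<le> 1}"
proof (rule convexI)
  fix x y :: "'a^'n" and u v :: real
  assume xy: "x \<in> {x. dual_norm cj \<nu> x \<le> 1}" "y \<in> {x. dual_norm cj \<nu> x \<le> 1}"
    and uv: "0 \<le> u" "0 \<le> v" "u + v = 1"
  have "\<forall>k. \<nu> k \<le> 1 \<longrightarrow> norm (vinner cj (u *\<^sub>R x + v *\<^sub>R y) k) \<le> 1"
  proof (intro allI impI)
    fix k assume k: "\<nu> k \<le> 1"
    have a: "norm (vinner cj x k) \<le> 1" "norm (vinner cj y k) \<le> 1" using xy k dual_le1[OF N] by auto
    have "norm (vinner cj (u *\<^sub>R x + v *\<^sub>R y) k) \<le> u * norm (vinner cj x k) + v * norm (vinner cj y k)"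
      unfolding vinner_comb_left using uv
      by (metis (no_types, lifting) abs_of_nonneg norm_mult norm_of_real norm_triangle_ineq)
    also have "\<dots> \<le> u * 1 + v * 1" using a uv by (intro add_mono mult_left_mono) auto
    finally show "norm (vinner cj (u *\<^sub>R x + v *\<^sub>R y) k) \<le> 1" using uv by simp
  qed
  then show "u *\<^sub>R x + v *\<^sub>R y \<in> {x. dual_norm cj \<nu> x \<le> 1}" using dual_le1[OF N] by auto
qed

end
end


context scal begin
context
  fixes \<nu> :: "'a ^ 'n \<Rightarrow> real"
  assumes N: "is_norm_on \<nu>"
begin

lemma HB:
  assumes z: "\<nu> z = 1"
  shows "\<exists>x0. dual_norm cj \<nu> x0 \<le> 1 \<and> vinner cj z x0 = 1"
proof -
  define S where "S = {y - z | y. \<nu> y < 1}"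
  have cS: "convex S" unfolding S_def
  proof (rule convexI)
    fix a b :: "'a^'n" and u v :: real
    assume "a \<in> {y - z | y. \<nu> y < 1}" "b \<in> {y - z | y. \<nu> y < 1}" and uv: "0 \<le> u" "0 \<le> v" "u + v = 1"
    then obtain y1 y2 where y: "a = y1 - z" "\<nu> y1 < 1" "b = y2 - z" "\<nu> y2 < 1" by auto
    have "\<nu> (u *\<^sub>R y1 + v *\<^sub>R y2) \<le> u * \<nu> y1 + v * \<nu> y2"
      using nu_tri[OF N, of "u *\<^sub>R y1" "v *\<^sub>R y2"] uv by (simp add: nu_scaleR[OF N])
    also have "\<dots> < 1"
    proof (cases "u = 0")
      case True then show ?thesis using uv y by simp
    next
      case False
      then have "u * \<nu> y1 < u * 1" using uv y by simp
      moreover have "v * \<nu> y2 \<le> v * 1" using mult_left_mono[of "\<nu> y2" 1 v] uv y by simp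
      ultimately show ?thesis using uv by simp
    qed
    moreover have "u *\<^sub>R a + v *\<^sub>R b = (u *\<^sub>R y1 + v *\<^sub>R y2) - z"
    proof -
      have "u *\<^sub>R a + v *\<^sub>R b = (u *\<^sub>R y1 + v *\<^sub>R y2) - (u + v) *\<^sub>R z"
        using y by (simp add: scaleR_diff_right scaleR_add_left)
      then show ?thesis using uv(3) by simp
    qed
    ultimately have "\<nu> (u *\<^sub>R y1 + v *\<^sub>R y2) < 1" "u *\<^sub>R a + v *\<^sub>R b = u *\<^sub>R y1 + v *\<^sub>R y2 - z"
      by linarith+
    then show "u *\<^sub>R a + v *\<^sub>R b \<in> {y - z | y. \<nu> y < 1}" by blast
  qed
  have "0 \<notin> S" unfolding S_def using z by auto
  then obtain a where a: "a \<noteq> 0" "\<forall>x\<in>S. 0 \<le> a \<bullet> x"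
    using separating_hyperplane_set_0[OF cS] by blast
  define w where "w = - a"
  have w0: "w \<noteq> 0" using a unfolding w_def by simp
  define s where "s = w \<bullet> z"
  have lt: "w \<bullet> y \<le> s" if "\<nu> y < 1" for y
  proof -
    have "y - z \<in> S" unfolding S_def using that by blast
    then have "0 \<le> a \<bullet> (y - z)" using a by blast
    then show ?thesis unfolding s_def w_def by (simp add: inner_diff_right)
  qed
  have le: "w \<bullet> y \<le> s" if y: "\<nu> y \<le> 1" for y
  proof (rule field_le_mult_one_interval)
    fix r :: real assume r: "0 < r" "r < 1"
    have "\<nu> (r *\<^sub>R y) < 1"
      using r y nu_nonneg[OF N, of y] by (simp add: nu_scaleR[OF N]) (smt (verit) mult_left_le_one_le mult_less_cancel_right1 mult.commute)
    then have "w \<bullet> (r *\<^sub>R y) \<le> s" by (rule lt)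
    then show "r * (w \<bullet> y) \<le> s" by simp
  qed
  have nb: "norm (vinner cj k w) \<le> s" if k: "\<nu> k \<le> 1" for k
  proof (cases "vinner cj k w = 0")
    case True
    have "w \<bullet> 0 \<le> s" by (rule le) (simp add: nu_0[OF N])
    then show ?thesis using True by simp
  next
    case False
    define v where "v = vinner cj k w"
    define u where "u = cj v / of_real (norm v)"
    have nv: "norm v > 0" using False unfolding v_def by simp
    have nu: "norm u = 1" unfolding u_def using nv by (simp add: norm_divide norm_cj)
    have "\<nu> (u *s k) \<le> 1" using k by (simp add: nu_smult[OF N] nu)
    then have "w \<bullet> (u *s k) \<le> s" by (rule le)
    moreover have "w \<bullet> (u *s k) = re (vinner cj (u *s k) w)" by (simp add: re_vinner inner_commute)
    moreover have "vinner cj (u *s k) w = of_real (norm v)"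
    proof -
      have "vinner cj (u *s k) w = u * v" unfolding v_def by (simp add: vinner_smult_left)
      also have "\<dots> = (v * cj v) / of_real (norm v)" unfolding u_def by (simp add: field_simps)
      also have "\<dots> = of_real (norm v)" using nv by (simp add: mult_cj power2_eq_square)
      finally show ?thesis .
    qed
    ultimately show ?thesis unfolding v_def by (simp add: re_of_real)
  qed
  obtain K where K: "K > 0" "\<forall>x. \<nu> x \<le> K * norm x" using nu_upper_pos[OF N] by blast
  have spos: "s > 0"
  proof -
    define k where "k = (1 / (K * norm w)) *\<^sub>R w"
    have nw: "norm w > 0" using w0 by simp
    have "\<nu> k = \<nu> w / (K * norm w)" unfolding k_def using nw K by (simp add: nu_scaleR[OF N])
    also have "\<dots> \<le> 1" using K nw by (simp add: field_simps)
    finally have "w \<bullet> k \<le> s" by (rule le)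
    moreover have "w \<bullet> k = (norm w)^2 / (K * norm w)" unfolding k_def by (simp add: dot_square_norm)
    moreover have "(norm w)^2 / (K * norm w) > 0" using nw K by simp
    ultimately show ?thesis by linarith
  qed
  define x0 where "x0 = (of_real (1 / s) :: 'a) *s w"
  have vx: "vinner cj k x0 = of_real (1 / s) * vinner cj k w" for k
    unfolding x0_def by (simp only: vinner_smult_right cj_of_real)
  have d: "dual_norm cj \<nu> x0 \<le> 1"
    unfolding dual_le1[OF N]
  proof (intro allI impI)
    fix k assume "\<nu> k \<le> 1"
    then have "norm (vinner cj k w) \<le> s" by (rule nb)
    then show "norm (vinner cj x0 k) \<le> 1" using spos
      by (subst norm_vinner_sym) (simp add: vx norm_mult norm_divide field_simps)
  qed
  have "norm (vinner cj z x0) \<le> 1" using nb[of z] z spos by (simp add: vx norm_mult norm_divide field_simps)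
  moreover have "re (vinner cj z x0) = 1" using spos
    by (simp only: vx re_of_real_mult re_vinner inner_commute s_def) simp
  ultimately have "vinner cj z x0 = of_real (norm (vinner cj z x0))" "norm (vinner cj z x0) = 1"
    using re_eq re_le by (smt (verit))+
  then have "vinner cj z x0 = 1" by simp
  then show ?thesis using d by blast
qed

end
end


lemma matvec_scaleR: "(C::'a::real_normed_algebra_1^'n^'m) *v (r *\<^sub>R y) = r *\<^sub>R (C *v y)"
  by (simp add: vec_eq_iff matrix_vector_mult_def scaleR_sum_right)

lemma minner_lin: "minner cj (A + (\<chi> i j. c * B$i$j)) M = minner cj A M + c * minner cj B M"
  by (simp add: minner_def sum.distrib sum_distrib_left algebra_simps)

lemma matvec_lin: "(A + (\<chi> i j. c * B$i$j)) *v x = A *v x + c *s (B *v x)"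
  by (simp add: vec_eq_iff matrix_vector_mult_def sum.distrib sum_distrib_left algebra_simps)

context scal begin
context
  fixes \<nu> :: "'a ^ 'n \<Rightarrow> real"
  assumes N: "is_norm_on \<nu>"
begin

lemma KL2:
  fixes C :: "'a^'n^'n"
  shows "\<exists>x y. x \<in> ext_ball (dual_norm cj \<nu>) \<and> y \<in> ext_ball \<nu> \<and>
    minner cj C (outer cj x y) = of_real (op_norm \<nu> C)"
proof -
  obtain y0 where y0: "\<nu> y0 \<le> 1" "op_norm \<nu> C = \<nu> (C *v y0)"
    "\<forall>y. \<nu> y \<le> 1 \<longrightarrow> \<nu> (C *v y) \<le> op_norm \<nu> C" using op_norm_max[OF N, of C] by blast
  define m where "m = op_norm \<nu> C"
  obtain x0 where x0: "dual_norm cj \<nu> x0 \<le> 1" "(C *v y0) \<bullet> x0 = m"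
  proof (cases "m = 0")
    case True
    have "dual_norm cj \<nu> 0 \<le> 1" using dual_le1[OF N] by simp
    then show ?thesis using that True by fastforce
  next
    case False
    then have mpos: "m > 0" using op_norm_nonneg[OF N, of C] m_def by linarith
    define z' where "z' = (of_real (1/m)::'a) *s (C *v y0)"
    have "\<nu> z' = 1" unfolding z'_def using mpos y0(2) m_def by (simp add: nu_smult[OF N] norm_divide)
    then obtain x1 where x1: "dual_norm cj \<nu> x1 \<le> 1" "vinner cj z' x1 = 1" using HB[OF N] by blast
    have "C *v y0 = (of_real m :: 'a) *s z'" unfolding z'_def using mpos by (simp add: vec_eq_iff)
    then have "vinner cj (C *v y0) x1 = of_real m" using x1(2) by (simp add: vinner_smult_left)
    then have "(C *v y0) \<bullet> x1 = m" using re_vinner re_of_real by metis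
    then show ?thesis using that x1 by blast
  qed
  let ?K = "{y. \<nu> y \<le> 1}" and ?D = "{x. dual_norm cj \<nu> x \<le> 1}"
  have bnd: "(C *v y) \<bullet> x \<le> m" if "x \<in> ?D" "y \<in> ?K" for x y
  proof -
    have "(C *v y) \<bullet> x = re (minner cj C (outer cj x y))" by (simp add: minner_outer re_vinner)
    also have "\<dots> \<le> norm (minner cj C (outer cj x y))" by (rule re_le)
    also have "\<dots> \<le> m" unfolding m_def using that by (intro mbound[OF N]) auto
    finally show ?thesis .
  qed
  have lin: "linear (\<lambda>y. (C *v y) \<bullet> x0)"
    by (rule linearI) (simp_all add: matrix_vector_right_distrib inner_add_left matvec_scaleR)
  obtain y1 where y1: "y1 extreme_point_of ?K" "(C *v y1) \<bullet> x0 = m"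
    using ext_max[OF ball_compact[OF N] ball_convex[OF N] lin, of y0 m] y0 x0 bnd by auto
  have y1K: "y1 \<in> ?K" using y1(1) unfolding extreme_point_of_def by blast
  obtain x1 where x1: "x1 extreme_point_of ?D" "(C *v y1) \<bullet> x1 = m"
    using ext_max[OF dual_compact[OF N] dual_convex[OF N]
        bounded_linear.linear[OF bounded_linear_inner_right], of x0 "C *v y1" m] x0 y1 bnd y1K by auto
  have x1D: "x1 \<in> ?D" using x1(1) unfolding extreme_point_of_def by blast
  have r: "re (minner cj C (outer cj x1 y1)) = m" using x1 by (simp add: minner_outer re_vinner)
  have n: "norm (minner cj C (outer cj x1 y1)) \<le> m" unfolding m_def using x1D y1K by (intro mbound[OF N]) auto
  have "minner cj C (outer cj x1 y1) = of_real (norm (minner cj C (outer cj x1 y1)))"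
    using r n by (intro re_eq) simp
  moreover have "norm (minner cj C (outer cj x1 y1)) = m" using r n re_le by (smt (verit))
  ultimately have "minner cj C (outer cj x1 y1) = of_real m" by simp
  then show ?thesis using x1 y1 unfolding ext_ball_def m_def by blast
qed

lemma op_norm_tri:
  fixes A B :: "'a^'n^'n"
  assumes c: "norm c = 1"
  shows "op_norm \<nu> (A + (\<chi> i j. c * B$i$j)) \<le> op_norm \<nu> A + op_norm \<nu> B"
proof -
  obtain y0 where y0: "\<nu> y0 \<le> 1" "op_norm \<nu> (A + (\<chi> i j. c * B$i$j)) = \<nu> ((A + (\<chi> i j. c * B$i$j)) *v y0)"
    using op_norm_max[OF N, of "A + (\<chi> i j. c * B$i$j)"] by blast
  have "\<nu> ((A + (\<chi> i j. c * B$i$j)) *v y0) \<le> \<nu> (A *v y0) + \<nu> (c *s (B *v y0))"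
    unfolding matvec_lin by (rule nu_tri[OF N])
  also have "\<nu> (c *s (B *v y0)) = \<nu> (B *v y0)" using c by (simp add: nu_smult[OF N])
  also have "\<nu> (A *v y0) \<le> op_norm \<nu> A" using op_norm_max[OF N, of A] y0 by blast
  also have "\<nu> (B *v y0) \<le> op_norm \<nu> B" using op_norm_max[OF N, of B] y0 by blast
  finally show ?thesis using y0 by simp
qed

lemma ext_dual: "x \<in> ext_ball (dual_norm cj \<nu>) \<Longrightarrow> dual_norm cj \<nu> x \<le> 1"
  unfolding ext_ball_def extreme_point_of_def by blast
lemma ext_nu: "y \<in> ext_ball \<nu> \<Longrightarrow> \<nu> y \<le> 1"
  unfolding ext_ball_def extreme_point_of_def by blast

lemma fwd:
  fixes A B :: "'a^'n^'n"
  assumes "norm_parallel \<nu> A B"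
  shows "\<exists>M. M \<in> V_set cj \<nu> A \<and> norm (minner cj B M) = op_norm \<nu> B"
proof -
  obtain c where c: "norm c = 1" "op_norm \<nu> (A + (\<chi> i j. c * B$i$j)) = op_norm \<nu> A + op_norm \<nu> B"
    using assms unfolding norm_parallel_def by blast
  obtain x y where xy: "x \<in> ext_ball (dual_norm cj \<nu>)" "y \<in> ext_ball \<nu>"
    "minner cj (A + (\<chi> i j. c * B$i$j)) (outer cj x y) = of_real (op_norm \<nu> A + op_norm \<nu> B)"
    using KL2[of "A + (\<chi> i j. c * B$i$j)"] c(2) by auto
  define a where "a = minner cj A (outer cj x y)"
  define b where "b = minner cj B (outer cj x y)"
  have eq: "a + c * b = of_real (op_norm \<nu> A + op_norm \<nu> B)"
    using xy(3) unfolding a_def b_def minner_lin .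
  have na: "norm a \<le> op_norm \<nu> A" unfolding a_def using xy by (intro mbound[OF N] ext_dual ext_nu)
  have nb: "norm b \<le> op_norm \<nu> B" unfolding b_def using xy by (intro mbound[OF N] ext_dual ext_nu)
  have "re a + re (c * b) = op_norm \<nu> A + op_norm \<nu> B"
    using arg_cong[OF eq, of re] by (simp add: re_add re_of_real)
  moreover have "re a \<le> norm a" "re (c * b) \<le> norm (c * b)" by (rule re_le)+
  moreover have "norm (c * b) = norm b" using c by (simp add: norm_mult)
  ultimately have ra: "re a = op_norm \<nu> A" "norm a = op_norm \<nu> A" and rb: "norm b = op_norm \<nu> B"
    using na nb by linarith+
  have "a = of_real (op_norm \<nu> A)" using re_eq[of a] ra by simp
  then have "outer cj x y \<in> V_set cj \<nu> A" unfolding V_set_def a_def using xy by blast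
  then show ?thesis using rb unfolding b_def by blast
qed

lemma bwd:
  fixes A B :: "'a^'n^'n"
  assumes M: "\<forall>j<k. M j \<in> V_set cj \<nu> A \<and> 0 < t j" and t: "(\<Sum>j<k. t j) = 1"
    and nB: "norm (\<Sum>j<k. of_real (t j) * minner cj B (M j)) = op_norm \<nu> B"
  shows "norm_parallel \<nu> A B"
proof -
  define s where "s = (\<Sum>j<k. of_real (t j) * minner cj B (M j))"
  obtain c where c: "norm c = 1" "c * s = of_real (op_norm \<nu> B)"
  proof (cases "s = 0")
    case True
    then show ?thesis using that[of 1] nB unfolding s_def by simp
  next
    case False
    have n: "norm s = op_norm \<nu> B" using nB s_def by simp
    have "norm (of_real (norm s) / s) = 1" using False by (simp add: norm_divide)
    moreover have "(of_real (norm s) / s) * s = of_real (op_norm \<nu> B)" using False n by simp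
    ultimately show ?thesis by (rule that)
  qed
  define A' where "A' = A + (\<chi> i j. c * B$i$j)"
  have each: "minner cj A (M j) = of_real (op_norm \<nu> A) \<and> norm (minner cj A' (M j)) \<le> op_norm \<nu> A'"
    if jk: "j < k" for j
  proof -
    have "M j \<in> V_set cj \<nu> A" using M jk by blast
    then obtain x y where "M j = outer cj x y" "x \<in> ext_ball (dual_norm cj \<nu>)" "y \<in> ext_ball \<nu>"
      "minner cj A (outer cj x y) = of_real (op_norm \<nu> A)"
      unfolding V_set_def by blast
    then show ?thesis by (auto intro!: mbound[OF N] ext_dual ext_nu)
  qed
  have "(\<Sum>j<k. of_real (t j) * minner cj A' (M j)) =
        (\<Sum>j<k. of_real (t j) * (of_real (op_norm \<nu> A) + c * minner cj B (M j)))"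
    unfolding A'_def minner_lin using each unfolding A'_def by (intro sum.cong) auto
  also have "\<dots> = of_real (\<Sum>j<k. t j) * of_real (op_norm \<nu> A) + c * s"
    unfolding s_def by (simp add: distrib_left sum.distrib sum_distrib_left sum_distrib_right mult_ac)
  also have "\<dots> = of_real (op_norm \<nu> A + op_norm \<nu> B)" using t c by simp
  finally have eq: "(\<Sum>j<k. of_real (t j) * minner cj A' (M j)) = of_real (op_norm \<nu> A + op_norm \<nu> B)" .
  have "op_norm \<nu> A + op_norm \<nu> B = norm (\<Sum>j<k. of_real (t j) * minner cj A' (M j))"
    unfolding eq using op_norm_nonneg[OF N, of A] op_norm_nonneg[OF N, of B]
    by (simp only: norm_of_real)
  also have "\<dots> \<le> (\<Sum>j<k. norm (of_real (t j) * minner cj A' (M j)))" by (rule norm_sum)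
  also have "\<dots> \<le> (\<Sum>j<k. t j * op_norm \<nu> A')"
  proof (intro sum_mono)
    fix j assume "j \<in> {..<k}"
    then have j: "0 < t j" "norm (minner cj A' (M j)) \<le> op_norm \<nu> A'" using M each by auto
    then show "norm (of_real (t j) * minner cj A' (M j)) \<le> t j * op_norm \<nu> A'"
      by (simp add: norm_mult mult_left_mono)
  qed
  also have "\<dots> = op_norm \<nu> A'" using t by (simp add: sum_distrib_right[symmetric])
  finally have "op_norm \<nu> A + op_norm \<nu> B \<le> op_norm \<nu> A'" .
  moreover have "op_norm \<nu> A' \<le> op_norm \<nu> A + op_norm \<nu> B" unfolding A'_def by (rule op_norm_tri[OF c(1)])
  ultimately show ?thesis unfolding norm_parallel_def A'_def using c(1) by (intro exI[of _ c]) simp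
qed

end
end


interpretation cplx: scal cnj Re
proof
  fix a b :: complex and r :: real
  show "cnj (a + b) = cnj a + cnj b" by simp
  show "cnj (a * b) = cnj a * cnj b" by simp
  show "cnj (cnj a) = a" by simp
  show "cmod (cnj a) = cmod a" by simp
  show "cnj (of_real r) = of_real r" by simp
  show "a \<bullet> b = Re (a * cnj b)" by (simp add: inner_complex_def)
  show "Re a \<le> cmod a" by (rule complex_Re_le_cmod)
  show "cmod a \<le> Re a \<Longrightarrow> a = of_real (cmod a)"
  proof -
    assume h: "cmod a \<le> Re a"
    have r: "Re a = cmod a" using complex_Re_le_cmod[of a] h by linarith
    have "(cmod a)^2 = (Re a)^2 + (Im a)^2" by (simp add: cmod_power2)
    then have "Im a = 0" using r by simp
    then show ?thesis using r by (simp add: complex_eq_iff)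
  qed
  show "a * cnj a = of_real (cmod a ^ 2)" by (rule complex_norm_square[symmetric])
qed

interpretation rl: scal "id :: real \<Rightarrow> real" "id"
proof
  fix a b :: real and r :: real
  show "id (a + b) = id a + id b" by simp
  show "id (a * b) = id a * id b" by simp
  show "id (id a) = a" by simp
  show "norm (id a) = norm a" by simp
  show "id (of_real r) = of_real r" by simp
  show "a \<bullet> b = id (a * id b)" by simp
  show "id a \<le> norm a" by simp
  show "norm a \<le> id a \<Longrightarrow> a = of_real (norm a)" by simp
  show "a * id a = of_real (norm a ^ 2)" by (simp add: power2_eq_square)
qed

theorem proposition3p6:
  shows
  "(\<forall>(\<nu>::complex ^ 'n \<Rightarrow> real) (A::complex ^ 'n ^ 'n) B. is_norm_on \<nu> \<longrightarrow>
      (norm_parallel \<nu> A B \<longleftrightarrow>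
        (\<exists>k::nat. k \<le> 3 \<and> (\<exists>(M::nat \<Rightarrow> complex ^ 'n ^ 'n) (t::nat \<Rightarrow> real).
            (\<forall>j<k. M j \<in> V_set cnj \<nu> A \<and> 0 < t j) \<and> (\<Sum>j<k. t j) = 1 \<and>
            norm (\<Sum>j<k. complex_of_real (t j) * minner cnj B (M j)) = op_norm \<nu> B))))
   \<and>
   (\<forall>(\<nu>::real ^ 'n \<Rightarrow> real) (A::real ^ 'n ^ 'n) B. is_norm_on \<nu> \<longrightarrow>
      (norm_parallel \<nu> A B \<longleftrightarrow>
        (\<exists>k::nat. k \<le> 2 \<and> (\<exists>(M::nat \<Rightarrow> real ^ 'n ^ 'n) (t::nat \<Rightarrow> real).
            (\<forall>j<k. M j \<in> V_set id \<nu> A \<and> 0 < t j) \<and> (\<Sum>j<k. t j) = 1 \<and>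
            norm (\<Sum>j<k. t j * minner id B (M j)) = op_norm \<nu> B))))"
proof (intro conjI allI impI iffI)
  fix \<nu> :: "complex ^ 'n \<Rightarrow> real" and A B :: "complex^'n^'n"
  assume N: "is_norm_on \<nu>"
  {
    assume "norm_parallel \<nu> A B"
    then obtain M where M: "M \<in> V_set cnj \<nu> A" "norm (minner cnj B M) = op_norm \<nu> B"
      using cplx.fwd[OF N] by blast
    show "\<exists>k::nat. k \<le> 3 \<and> (\<exists>(M::nat \<Rightarrow> complex ^ 'n ^ 'n) (t::nat \<Rightarrow> real).
            (\<forall>j<k. M j \<in> V_set cnj \<nu> A \<and> 0 < t j) \<and> (\<Sum>j<k. t j) = 1 \<and>
            norm (\<Sum>j<k. complex_of_real (t j) * minner cnj B (M j)) = op_norm \<nu> B)"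
      by (rule exI[of _ 1], rule conjI, simp, rule exI[of _ "\<lambda>_. M"], rule exI[of _ "\<lambda>_. 1"]) (use M in simp)
  next
    assume "\<exists>k::nat. k \<le> 3 \<and> (\<exists>(M::nat \<Rightarrow> complex ^ 'n ^ 'n) (t::nat \<Rightarrow> real).
            (\<forall>j<k. M j \<in> V_set cnj \<nu> A \<and> 0 < t j) \<and> (\<Sum>j<k. t j) = 1 \<and>
            norm (\<Sum>j<k. complex_of_real (t j) * minner cnj B (M j)) = op_norm \<nu> B)"
    then show "norm_parallel \<nu> A B" using cplx.bwd[OF N] by blast
  }
next
  fix \<nu> :: "real ^ 'n \<Rightarrow> real" and A B :: "real^'n^'n"
  assume N: "is_norm_on \<nu>"
  {
    assume "norm_parallel \<nu> A B"
    then obtain M where M: "M \<in> V_set id \<nu> A" "norm (minner id B M) = op_norm \<nu> B"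
      using rl.fwd[OF N] by blast
    show "\<exists>k::nat. k \<le> 2 \<and> (\<exists>(M::nat \<Rightarrow> real ^ 'n ^ 'n) (t::nat \<Rightarrow> real).
            (\<forall>j<k. M j \<in> V_set id \<nu> A \<and> 0 < t j) \<and> (\<Sum>j<k. t j) = 1 \<and>
            norm (\<Sum>j<k. t j * minner id B (M j)) = op_norm \<nu> B)"
      by (rule exI[of _ 1], rule conjI, simp, rule exI[of _ "\<lambda>_. M"], rule exI[of _ "\<lambda>_. 1"]) (use M in simp)
  next
    assume "\<exists>k::nat. k \<le> 2 \<and> (\<exists>(M::nat \<Rightarrow> real ^ 'n ^ 'n) (t::nat \<Rightarrow> real).
            (\<forall>j<k. M j \<in> V_set id \<nu> A \<and> 0 < t j) \<and> (\<Sum>j<k. t j) = 1 \<and>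
            norm (\<Sum>j<k. t j * minner id B (M j)) = op_norm \<nu> B)"
    then obtain k :: nat and M :: "nat \<Rightarrow> real^'n^'n" and t :: "nat \<Rightarrow> real" where "\<forall>j<k. M j \<in> V_set id \<nu> A \<and> 0 < t j" "(\<Sum>j<k. t j) = 1"
       "norm (\<Sum>j<k. t j * minner id B (M j)) = op_norm \<nu> B" by blast
    then show "norm_parallel \<nu> A B" using rl.bwd[OF N, where k=k and M=M and t=t] by simp
  }
qed


end
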